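(* Let $X$ be a Baire space, $Y$ a topological space, $(Z,d)$ a metric space and $f:X\times Y\to Z$ a mapping. Let $b\in Y$ have a countable neighborhood base in $Y$. Suppose $f^y$ is quasicontinuous for every $y\in Y$, and $f_x$ is continuous at $b$ for every $x$ in a given dense Baire subspace $Q$ of $X$. Then: (1) $f$ is quasicontinuous with respect to the variable $y$ at each point of $X\times\{b\}$; (2) the set of all $x\in X$ such that $f$ is continuous at $(x,b)$ is residual in $X$.
   Context: $f_x(y)=f^y(x)=f(x,y)$. A mapping $g:X\to Z$ is quasicontinuous at $a$ if for each neighborhood $U$ of $a$ and neighborhood $W$ of $g(a)$ there is an open $O$ with $\emptyset\ne O\subset U$ and $g(O)\subset W$; quasicontinuous means at every point. $f$ is quasicontinuous with respect to the variable $y$ at $(a,b)$ if for each neighborhood $U$ of $a$ in $X$ and each $\varepsilon>0$ there are a neighborhood $V$ of $b$ in $Y$ and an open $O\subset X$ with $\emptyset\ne O\subset U$ such that $d(f(a,b),f(x,y))\le\varepsilon$ for all $x\in O$, $y\in V$. Residual means containing a countable intersection of dense open sets. *)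

theory Defs
  imports "HOL-Analysis.Analysis"
begin

definition dense_in :: "'a topology \<Rightarrow> 'a set \<Rightarrow> bool" where
  "dense_in T S \<longleftrightarrow> S \<subseteq> topspace T \<and> T closure_of S = topspace T"

definition baire_space :: "'a topology \<Rightarrow> bool" where
  "baire_space T \<longleftrightarrow>
     (\<forall>G :: nat \<Rightarrow> 'a set. (\<forall>n. openin T (G n) \<and> dense_in T (G n))
        \<longrightarrow> dense_in T (\<Inter>n. G n))"

definition residual :: "'a::topological_space set \<Rightarrow> bool" where
  "residual S \<longleftrightarrow>
     (\<exists>G :: nat \<Rightarrow> 'a set. (\<forall>n. open (G n) \<and> closure (G n) = UNIV) \<and> (\<Inter>n. G n) \<subseteq> S)"

definition quasicont_at :: "('a::topological_space \<Rightarrow> 'b::topological_space) \<Rightarrow> 'a \<Rightarrow> bool" where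
  "quasicont_at g a \<longleftrightarrow>
     (\<forall>U W. open U \<and> a \<in> U \<and> open W \<and> g a \<in> W \<longrightarrow>
        (\<exists>Ob. open Ob \<and> Ob \<noteq> {} \<and> Ob \<subseteq> U \<and> g ` Ob \<subseteq> W))"

definition quasicont :: "('a::topological_space \<Rightarrow> 'b::topological_space) \<Rightarrow> bool" where
  "quasicont g \<longleftrightarrow> (\<forall>a. quasicont_at g a)"

definition quasicont_wrt_y_at ::
  "('a::topological_space \<times> 'b::topological_space \<Rightarrow> 'c::metric_space) \<Rightarrow> 'a \<Rightarrow> 'b \<Rightarrow> bool" where
  "quasicont_wrt_y_at f a b \<longleftrightarrow>
     (\<forall>U. open U \<and> a \<in> U \<longrightarrow> (\<forall>\<epsilon>>0. \<exists>V Ob. open V \<and> b \<in> V \<and> open Ob \<and> Ob \<noteq> {} \<and> Ob \<subseteq> U \<and>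
        (\<forall>x\<in>Ob. \<forall>y\<in>V. dist (f (a, b)) (f (x, y)) \<le> \<epsilon>)))"

definition countable_nhds_base_at :: "'a::topological_space \<Rightarrow> bool" where
  "countable_nhds_base_at b \<longleftrightarrow>
     (\<exists>\<B>. countable \<B> \<and> (\<forall>N\<in>\<B>. b \<in> interior N) \<and>
          (\<forall>W. open W \<and> b \<in> W \<longrightarrow> (\<exists>N\<in>\<B>. N \<subseteq> W)))"

end

theory Submission
  imports Defs
begin

lemma in_closureI: "(\<And>S. open S \<Longrightarrow> x \<in> S \<Longrightarrow> S \<inter> X \<noteq> {}) \<Longrightarrow> x \<in> closure X"
  by (metis Compl_iff Int_commute closure_subset disjoint_eq_subset_Compl open_Compl closed_closure subset_eq)

lemma closure_nbhdD: "x \<in> closure X \<Longrightarrow> open S \<Longrightarrow> x \<in> S \<Longrightarrow> S \<inter> X \<noteq> {}"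
  by (metis open_Int_closure_eq_empty disjoint_iff_not_equal)

lemma dense_sub: "dense_in (subtopology euclidean Q) H \<longleftrightarrow> H \<subseteq> Q \<and> Q \<subseteq> closure H"
  unfolding dense_in_def closure_of_subtopology by (auto simp: Int_absorb1)

lemma baireQ:
  assumes "baire_space (subtopology euclidean Q)"
    and "\<forall>n::nat. open (T n)" and "\<forall>n. Q \<subseteq> closure (Q \<inter> T n)"
  shows "Q \<subseteq> closure (Q \<inter> (\<Inter>n. T n))"
proof -
  have "openin (subtopology euclidean Q) (Q \<inter> T n)" for n
    using assms(2) unfolding openin_open by blast
  moreover have "dense_in (subtopology euclidean Q) (Q \<inter> T n)" for n
    using assms(3) unfolding dense_sub by blast
  ultimately have H: "\<forall>n. openin (subtopology euclidean Q) (Q \<inter> T n) \<and> dense_in (subtopology euclidean Q) (Q \<inter> T n)"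
    by blast
  have D: "dense_in (subtopology euclidean Q) (\<Inter>n. Q \<inter> T n)"
  proof -
    have "(\<forall>n. openin (subtopology euclidean Q) (Q \<inter> T n) \<and> dense_in (subtopology euclidean Q) (Q \<inter> T n))
      \<longrightarrow> dense_in (subtopology euclidean Q) (\<Inter>n. Q \<inter> T n)"
      using assms(1)[unfolded baire_space_def] by (rule spec)
    then show ?thesis using H by (rule mp)
  qed
  have E: "(\<Inter>n. Q \<inter> T n) = Q \<inter> (\<Inter>n. T n)" by auto
  show ?thesis using D unfolding E dense_sub by blast
qed

lemma part1:
  fixes f :: "'a::topological_space \<times> 'b::topological_space \<Rightarrow> 'c::metric_space"
  assumes cb: "countable_nhds_base_at b"
    and qc: "\<forall>y. quasicont (\<lambda>x. f (x, y))"
    and dQ: "closure Q = UNIV"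
    and bQ: "\<And>T. (\<forall>n::nat. open (T n)) \<Longrightarrow> (\<forall>n. Q \<subseteq> closure (Q \<inter> T n)) \<Longrightarrow> Q \<subseteq> closure (Q \<inter> (\<Inter>n. T n))"
    and ct: "\<forall>x\<in>Q. ((\<lambda>y. f (x, y)) \<longlongrightarrow> f (x, b)) (at b)"
    and U: "open U" "a \<in> U" and e: "e > 0"
  shows "\<exists>V Ob. open V \<and> b \<in> V \<and> open Ob \<and> Ob \<noteq> {} \<and> Ob \<subseteq> U \<and>
        (\<forall>x\<in>Ob. \<forall>y\<in>V. dist (f (a, b)) (f (x, y)) \<le> e)"
proof -
  obtain B where B: "countable B" "\<forall>N\<in>B. b \<in> interior N" "\<forall>W. open W \<and> b \<in> W \<longrightarrow> (\<exists>N\<in>B. N \<subseteq> W)"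
    using cb unfolding countable_nhds_base_at_def by (elim exE conjE) (rule that)
  have "B \<noteq> {}" using B(3)[rule_format, of UNIV] by auto
  define N where "N = from_nat_into B"
  have NB: "\<And>n. N n \<in> B" unfolding N_def using \<open>B\<noteq>{}\<close> by (rule from_nat_into)
  have Nsurj: "\<And>M. M \<in> B \<Longrightarrow> \<exists>n. N n = M" unfolding N_def using B(1) by (rule from_nat_into_surj)
  have e3: "e/3 > 0" using e by simp
  have qa: "quasicont_at (\<lambda>x. f (x,b)) a" using qc unfolding quasicont_def by blast
  have "\<exists>Ob. open Ob \<and> Ob \<noteq> {} \<and> Ob \<subseteq> U \<and> (\<lambda>x. f (x,b)) ` Ob \<subseteq> ball (f (a,b)) (e/3)"
    using qa[unfolded quasicont_at_def, rule_format, of U "ball (f (a,b)) (e/3)"] U e3 by simp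
  then obtain O1 where O1: "open O1" "O1 \<noteq> {}" "O1 \<subseteq> U" "(\<lambda>x. f (x,b)) ` O1 \<subseteq> ball (f (a,b)) (e/3)"
    by (elim exE conjE) (rule that)
  define A where "A n = {x \<in> Q \<inter> O1. \<forall>y\<in>N n. dist (f (x,y)) (f (x,b)) \<le> e/3}" for n
  have cover: "\<exists>n. q \<in> A n" if q: "q \<in> Q \<inter> O1" for q
  proof -
    have "((\<lambda>y. f (q, y)) \<longlongrightarrow> f (q, b)) (at b)" using ct q by auto
    then have "eventually (\<lambda>y. dist (f (q,y)) (f (q,b)) < e/3) (at b)"
      by (rule tendstoD[OF _ e3])
    then obtain W where W: "open W" "b \<in> W" "\<forall>y\<in>W. y \<noteq> b \<longrightarrow> dist (f (q,y)) (f (q,b)) < e/3"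
      unfolding eventually_at_topological by auto
    obtain M where "M \<in> B" "M \<subseteq> W" using B(3)[rule_format, of W] W(1,2) by blast
    then obtain n where n: "N n = M" using Nsurj by blast
    have "\<forall>y\<in>N n. dist (f (q,y)) (f (q,b)) \<le> e/3"
    proof
      fix y assume "y \<in> N n"
      then have yW: "y \<in> W" using n \<open>M \<subseteq> W\<close> by blast
      show "dist (f (q,y)) (f (q,b)) \<le> e/3"
      proof (cases "y = b")
        case True then show ?thesis using e3 by simp
      next
        case False then show ?thesis using W(3) yW by force
      qed
    qed
    then have "q \<in> A n" unfolding A_def using q by blast
    then show ?thesis by blast
  qed
  have key: "\<exists>n G. open G \<and> G \<noteq> {} \<and> G \<subseteq> O1 \<and> Q \<inter> G \<subseteq> closure (A n)"
  proof (rule ccontr)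
    assume nk: "\<not> ?thesis"
    define T where "T n = - closure (A n)" for n
    have oT: "\<forall>n. open (T n)" by (simp add: T_def open_Compl)
    have dT: "\<forall>n. Q \<subseteq> closure (Q \<inter> T n)"
    proof (intro allI subsetI)
      fix n q assume q: "q \<in> Q"
      show "q \<in> closure (Q \<inter> T n)"
      proof (cases "q \<in> closure O1")
        case False
        have "closure (A n) \<subseteq> closure O1" by (rule closure_mono) (auto simp: A_def)
        then have "q \<in> Q \<inter> T n" using False q T_def by auto
        then show ?thesis using closure_subset by blast
      next
        case True
        show ?thesis
        proof (rule in_closureI)
          fix S assume S: "open S" "q \<in> S"
          have "S \<inter> O1 \<noteq> {}" using closure_nbhdD[OF True S] .
          moreover have "open (S \<inter> O1)" using S O1 by auto
          ultimately have "\<not> (Q \<inter> (S \<inter> O1) \<subseteq> closure (A n))" using nk by blast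
          then show "S \<inter> (Q \<inter> T n) \<noteq> {}" unfolding T_def by blast
        qed
      qed
    qed
    have dI: "Q \<subseteq> closure (Q \<inter> (\<Inter>n. T n))" using bQ[OF oT dT] .
    obtain z where "z \<in> O1" using O1 by blast
    then have "O1 \<inter> Q \<noteq> {}" using closure_nbhdD[of z Q O1] dQ O1 by auto
    then obtain q0 where "q0 \<in> Q" "q0 \<in> O1" by blast
    then have "O1 \<inter> (Q \<inter> (\<Inter>n. T n)) \<noteq> {}" using closure_nbhdD[of q0 _ O1] dI O1 by blast
    then obtain q where q: "q \<in> O1" "q \<in> Q" "\<forall>n. q \<in> T n" by blast
    then obtain n where "q \<in> A n" using cover by blast
    then show False using q(3) closure_subset unfolding T_def by blast
  qed
  then obtain n G where G: "open G" "G \<noteq> {}" "G \<subseteq> O1" "Q \<inter> G \<subseteq> closure (A n)" by blast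
  show ?thesis
  proof (intro exI conjI)
    show "open (interior (N n))" by simp
    show "b \<in> interior (N n)" using B(2) NB by blast
    show "open G" "G \<noteq> {}" "G \<subseteq> U" using G O1 by auto
    show "\<forall>x\<in>G. \<forall>y\<in>interior (N n). dist (f (a,b)) (f (x,y)) \<le> e"
    proof (intro ballI, rule ccontr)
      fix x y assume x: "x \<in> G" and y: "y \<in> interior (N n)" and nd: "\<not> dist (f (a,b)) (f (x,y)) \<le> e"
      define W where "W = - cball (f (a,b)) (2*e/3)"
      have oW: "open W" unfolding W_def by (rule open_Compl) (rule closed_cball)
      have "f (x,y) \<in> W" using nd e by (auto simp: W_def)
      moreover have qx: "quasicont_at (\<lambda>x. f (x,y)) x" using qc unfolding quasicont_def by blast
      ultimately have "\<exists>Ob. open Ob \<and> Ob \<noteq> {} \<and> Ob \<subseteq> G \<and> (\<lambda>x. f (x,y)) ` Ob \<subseteq> W"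
        using qx[unfolded quasicont_at_def, rule_format, of G W] G(1) x oW by simp
      then obtain O' where O': "open O'" "O' \<noteq> {}" "O' \<subseteq> G" "(\<lambda>x. f (x,y)) ` O' \<subseteq> W"
        by (elim exE conjE) (rule that)
      obtain z where "z \<in> O'" using O' by blast
      then have "O' \<inter> Q \<noteq> {}" using closure_nbhdD[of z Q O'] dQ O' by auto
      then obtain q where q: "q \<in> O'" "q \<in> Q" by blast
      then have "q \<in> closure (A n)" using G O' by blast
      then have "O' \<inter> A n \<noteq> {}" using closure_nbhdD[OF _ O'(1) q(1)] by blast
      then obtain x' where x': "x' \<in> O'" "x' \<in> A n" by blast
      have "y \<in> N n" using y interior_subset by blast
      then have d1: "dist (f (x',y)) (f (x',b)) \<le> e/3" using x' unfolding A_def by blast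
      have "x' \<in> O1" using x' unfolding A_def by blast
      then have d2: "dist (f (a,b)) (f (x',b)) < e/3" using O1(4) by auto
      have "dist (f (a,b)) (f (x',y)) \<le> dist (f (a,b)) (f (x',b)) + dist (f (x',y)) (f (x',b))"
        by (simp add: dist_triangle2)
      then have "dist (f (a,b)) (f (x',y)) < 2*e/3" using d1 d2 by linarith
      moreover have "f (x',y) \<in> W" using O'(4) x' by blast
      ultimately show False by (simp add: W_def)
    qed
  qed
qed

lemma part2:
  fixes f :: "'a::topological_space \<times> 'b::topological_space \<Rightarrow> 'c::metric_space"
  assumes P: "\<And>a U e. open U \<Longrightarrow> a \<in> U \<Longrightarrow> e > 0 \<Longrightarrow> \<exists>V Ob. open V \<and> b \<in> V \<and> open Ob \<and> Ob \<noteq> {} \<and> Ob \<subseteq> U \<and>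
        (\<forall>x\<in>Ob. \<forall>y\<in>V. dist (f (a, b)) (f (x, y)) \<le> e)"
  shows "residual {x. (f \<longlongrightarrow> f (x, b)) (at (x, b))}"
proof -
  define Gs where "Gs k = \<Union>{Ob. open Ob \<and> (\<exists>V. open V \<and> b \<in> V \<and>
     (\<forall>x\<in>Ob. \<forall>x'\<in>Ob. \<forall>y\<in>V. \<forall>y'\<in>V. dist (f (x,y)) (f (x',y')) \<le> 1 / real (Suc k)))}" for k
  have oG: "open (Gs k)" for k unfolding Gs_def by auto
  have dG: "closure (Gs k) = UNIV" for k
  proof -
    have "z \<in> closure (Gs k)" for z
    proof (rule in_closureI)
      fix S assume S: "open S" "z \<in> S"
      have "1 / (2 * real (Suc k)) > 0" by simp
      from P[OF S this] obtain V Ob where VO: "open V" "b \<in> V" "open Ob" "Ob \<noteq> {}" "Ob \<subseteq> S"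
        "\<forall>x\<in>Ob. \<forall>y\<in>V. dist (f (z, b)) (f (x, y)) \<le> 1 / (2 * real (Suc k))" by blast
      have "\<forall>x\<in>Ob. \<forall>x'\<in>Ob. \<forall>y\<in>V. \<forall>y'\<in>V. dist (f (x,y)) (f (x',y')) \<le> 1 / real (Suc k)"
      proof (intro ballI)
        fix x x' y y' assume "x \<in> Ob" "x' \<in> Ob" "y \<in> V" "y' \<in> V"
        then have "dist (f (z, b)) (f (x, y)) \<le> 1 / (2 * real (Suc k))"
             "dist (f (z, b)) (f (x', y')) \<le> 1 / (2 * real (Suc k))" using VO(6) by auto
        moreover have "dist (f (x,y)) (f (x',y')) \<le> dist (f (z, b)) (f (x, y)) + dist (f (z, b)) (f (x', y'))"
          by (simp add: dist_triangle3)
        ultimately have "dist (f (x,y)) (f (x',y')) \<le> 1 / (2 * real (Suc k)) + 1 / (2 * real (Suc k))"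
          by (meson add_mono order_trans)
        moreover have "1 / (2 * real (Suc k)) + 1 / (2 * real (Suc k)) = 1 / real (Suc k)"
          by (simp add: field_simps)
        ultimately show "dist (f (x,y)) (f (x',y')) \<le> 1 / real (Suc k)" by (simp only:)
      qed
      then have "Ob \<subseteq> Gs k" unfolding Gs_def using VO by blast
      then show "S \<inter> Gs k \<noteq> {}" using VO by blast
    qed
    then show ?thesis by auto
  qed
  have sub: "(\<Inter>k. Gs k) \<subseteq> {x. (f \<longlongrightarrow> f (x, b)) (at (x, b))}"
  proof
    fix x assume x: "x \<in> (\<Inter>k. Gs k)"
    have "(f \<longlongrightarrow> f (x, b)) (at (x, b))"
    proof (rule tendstoI)
      fix e :: real assume "e > 0"
      then obtain k where k: "inverse (real (Suc k)) < e" using reals_Archimedean by blast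
      from x have "x \<in> Gs k" by blast
      then obtain Ob V where OV: "open Ob" "x \<in> Ob" "open V" "b \<in> V"
        "\<forall>x\<in>Ob. \<forall>x'\<in>Ob. \<forall>y\<in>V. \<forall>y'\<in>V. dist (f (x,y)) (f (x',y')) \<le> 1 / real (Suc k)"
        unfolding Gs_def by blast
      show "eventually (\<lambda>p. dist (f p) (f (x, b)) < e) (at (x, b))"
        unfolding eventually_at_topological
      proof (intro exI conjI ballI impI)
        show "open (Ob \<times> V)" using OV by (simp add: open_Times)
        show "(x, b) \<in> Ob \<times> V" using OV by simp
        fix p assume "p \<in> Ob \<times> V"
        then obtain x1 y1 where "p = (x1, y1)" "x1 \<in> Ob" "y1 \<in> V" by blast
        then have "dist (f p) (f (x, b)) \<le> 1 / real (Suc k)" using OV by simp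
        then show "dist (f p) (f (x, b)) < e" using k by (simp add: inverse_eq_divide)
      qed
    qed
    then show "x \<in> {x. (f \<longlongrightarrow> f (x, b)) (at (x, b))}" by simp
  qed
  show ?thesis unfolding residual_def using oG dG sub by blast
qed

theorem theorem4p4:
  fixes f :: "'a::topological_space \<times> 'b::topological_space \<Rightarrow> 'c::metric_space"
    and b :: 'b and Q :: "'a set"
  assumes "baire_space (euclidean :: 'a topology)"
    and "countable_nhds_base_at b"
    and "\<forall>y. quasicont (\<lambda>x. f (x, y))"
    and "dense_in euclidean Q"
    and "baire_space (subtopology euclidean Q)"
    and "\<forall>x\<in>Q. ((\<lambda>y. f (x, y)) \<longlongrightarrow> f (x, b)) (at b)"
  shows "(\<forall>a. quasicont_wrt_y_at f a b) \<and> residual {x. (f \<longlongrightarrow> f (x, b)) (at (x, b))}"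
proof -
  have dQ: "closure Q = UNIV" using assms(4) unfolding dense_in_def by simp
  have P: "\<exists>V Ob. open V \<and> b \<in> V \<and> open Ob \<and> Ob \<noteq> {} \<and> Ob \<subseteq> U \<and>
        (\<forall>x\<in>Ob. \<forall>y\<in>V. dist (f (a, b)) (f (x, y)) \<le> e)"
    if "open U" "a \<in> U" "e > 0" for a U e
    by (rule part1[OF assms(2) assms(3) dQ baireQ[OF assms(5)] assms(6) that])
  have A1: "\<forall>a. quasicont_wrt_y_at f a b"
    unfolding quasicont_wrt_y_at_def
  proof (intro allI impI)
    fix a :: 'a and U :: "'a set" and e :: real assume "open U \<and> a \<in> U" "0 < e"
    then show "\<exists>V Ob. open V \<and> b \<in> V \<and> open Ob \<and> Ob \<noteq> {} \<and> Ob \<subseteq> U \<and>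
        (\<forall>x\<in>Ob. \<forall>y\<in>V. dist (f (a, b)) (f (x, y)) \<le> e)"
      using P by blast
  qed
  have A2: "residual {x. (f \<longlongrightarrow> f (x, b)) (at (x, b))}"
    by (rule part2) (rule P)
  show ?thesis using A1 A2 by (rule conjI)
qed

end
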